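(* Every $\operatorname{B}$-set $B\subset\mathbb{R}^2$ has positive reach.
   Context: A set has positive reach if there is $\varepsilon>0$ such that every point at distance less than $\varepsilon$ from it has a unique nearest point in it. A function $f$ on an open interval is semiconcave if $f(x)-\frac c2x^2$ is concave for some $c\geq0$, and semiconvex if $-f$ is semiconcave. $M\subset\mathbb{R}^2$ is a $\operatorname{B}_-$-set if there are $r>0$ and Lipschitz functions $\psi\leq0\leq\varphi$ on $[0,r]$ with $\varphi$ semiconcave on $(0,r)$, $\psi$ semiconvex on $(0,r)$, $\varphi(0)=\psi(0)=0$, $\varphi'_+(0)=\psi'_+(0)=0$ and $M=\{(x,y):x\in[0,r],\ \psi(x)\leq y\leq\varphi(x)\}$; a $\operatorname{B}_+$-set is defined the same way with $[-r,r]$, $(-r,r)$ and $\varphi'(0)=\psi'(0)=0$; a $\operatorname{B}$-set is a $\operatorname{B}_-$-set or a $\operatorname{B}_+$-set. *)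

theory Defs
  imports "HOL-Analysis.Analysis"
begin

text \<open>The plane R^2 is modelled as real \<times> real (Euclidean distance).\<close>

definition positive_reach :: "(real \<times> real) set \<Rightarrow> bool" where
  "positive_reach M \<longleftrightarrow>
     (\<exists>\<epsilon>>0. \<forall>p. infdist p M < \<epsilon> \<longrightarrow> (\<exists>!q. q \<in> M \<and> dist p q = infdist p M))"

definition semiconcave_on :: "real set \<Rightarrow> (real \<Rightarrow> real) \<Rightarrow> bool" where
  "semiconcave_on I f \<longleftrightarrow> (\<exists>c\<ge>0. concave_on I (\<lambda>x. f x - c / 2 * x\<^sup>2))"

definition semiconvex_on :: "real set \<Rightarrow> (real \<Rightarrow> real) \<Rightarrow> bool" where
  "semiconvex_on I f \<longleftrightarrow> semiconcave_on I (\<lambda>x. - f x)"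

definition B_minus_set :: "(real \<times> real) set \<Rightarrow> bool" where
  "B_minus_set M \<longleftrightarrow>
     (\<exists>r>0. \<exists>\<phi> \<psi> :: real \<Rightarrow> real.
        (\<forall>x\<in>{0..r}. \<psi> x \<le> 0 \<and> 0 \<le> \<phi> x) \<and>
        (\<exists>L. L-lipschitz_on {0..r} \<phi>) \<and> (\<exists>L. L-lipschitz_on {0..r} \<psi>) \<and>
        semiconcave_on {0<..<r} \<phi> \<and> semiconvex_on {0<..<r} \<psi> \<and>
        \<phi> 0 = 0 \<and> \<psi> 0 = 0 \<and>
        (\<phi> has_real_derivative 0) (at_right 0) \<and>
        (\<psi> has_real_derivative 0) (at_right 0) \<and>
        M = {(x, y). x \<in> {0..r} \<and> \<psi> x \<le> y \<and> y \<le> \<phi> x})"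

definition B_plus_set :: "(real \<times> real) set \<Rightarrow> bool" where
  "B_plus_set M \<longleftrightarrow>
     (\<exists>r>0. \<exists>\<phi> \<psi> :: real \<Rightarrow> real.
        (\<forall>x\<in>{-r..r}. \<psi> x \<le> 0 \<and> 0 \<le> \<phi> x) \<and>
        (\<exists>L. L-lipschitz_on {-r..r} \<phi>) \<and> (\<exists>L. L-lipschitz_on {-r..r} \<psi>) \<and>
        semiconcave_on {-r<..<r} \<phi> \<and> semiconvex_on {-r<..<r} \<psi> \<and>
        \<phi> 0 = 0 \<and> \<psi> 0 = 0 \<and>
        (\<phi> has_real_derivative 0) (at 0) \<and>
        (\<psi> has_real_derivative 0) (at 0) \<and>
        M = {(x, y). x \<in> {-r..r} \<and> \<psi> x \<le> y \<and> y \<le> \<phi> x})"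

definition B_set :: "(real \<times> real) set \<Rightarrow> bool" where
  "B_set M \<longleftrightarrow> B_minus_set M \<or> B_plus_set M"

end

theory Submission
  imports Defs
begin
lemma core:
  fixes u v a1 b1 a2 b2 c d fm :: real
  assumes "c \<ge> 0" "c * d \<le> 1/2" "d \<ge> 0"
    and h1: "(u-a1)^2+(v-b1)^2 = d^2" and h2: "(u-a2)^2+(v-b2)^2 = d^2"
    and ne: "(a1,b1) \<noteq> (a2,b2)"
    and lo: "fm \<ge> (b1+b2)/2 - c/8*(a1-a2)^2" and up: "fm < (b1+b2)/2"
  shows "(u-(a1+a2)/2)^2 + (v - fm)^2 < d^2"
proof -
  define D where "D = (a1-a2)^2+(b1-b2)^2"
  define t where "t = (b1+b2)/2 - fm"
  define w where "w = v - (b1+b2)/2"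
  have "a1 \<noteq> a2 \<or> b1 \<noteq> b2" using ne by auto
  hence Dpos: "D > 0" unfolding D_def
    by (auto simp add: add_pos_nonneg add_nonneg_pos)
  have "(u-(a1+a2)/2)^2 + w^2 = ((u-a1)^2+(v-b1)^2 + ((u-a2)^2+(v-b2)^2))/2 - D/4"
    unfolding D_def w_def by (simp add: power2_eq_square field_simps)
  hence mid: "(u-(a1+a2)/2)^2 + w^2 = d^2 - D/4" using h1 h2 by simp
  have "(u-(a1+a2)/2)^2 + (v - fm)^2 = ((u-(a1+a2)/2)^2 + w^2) + 2*t*w + t^2"
    unfolding t_def w_def by (simp add: power2_eq_square field_simps)
  hence eq: "(u-(a1+a2)/2)^2 + (v - fm)^2 = d^2 - D/4 + 2*t*w + t^2" using mid by simp
  have tpos: "t > 0" using up t_def by simp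
  have "c/8*(a1-a2)^2 \<le> c/8*D" unfolding D_def using \<open>c\<ge>0\<close> by (intro mult_left_mono) auto
  hence tle: "t \<le> c*D/8" using lo unfolding t_def by (simp add: field_simps)
  have "(u-(a1+a2)/2)^2 \<ge> 0" by simp
  moreover have "w^2 \<ge> 0" by simp
  moreover have "D/4 > 0" using Dpos by simp
  ultimately have w2: "w^2 \<le> d^2" and D4': "D/4 \<le> d^2" using mid by linarith+
  have D4: "D \<le> 4*d^2" using D4' by simp
  have wle: "w \<le> d" using w2 \<open>d\<ge>0\<close> by (rule power2_le_imp_le)
  have "2*t*w \<le> 2*t*d" using wle tpos by simp
  also have "\<dots> \<le> 2*(c*D/8)*d" using tle \<open>d\<ge>0\<close> by (intro mult_right_mono) (auto simp: algebra_simps)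
  also have "\<dots> = (c*d)*D/4" by simp
  also have "\<dots> \<le> D/8" using \<open>c*d \<le> 1/2\<close> Dpos by (simp add: mult_right_mono)
  finally have A: "2*t*w \<le> D/8" .
  have "c*D \<le> c*(4*d^2)" using D4 \<open>c\<ge>0\<close> by (rule mult_left_mono)
  hence "t \<le> c*d^2/2" using tle by simp
  also have "\<dots> = (c*d)*d/2" by (simp add: power2_eq_square)
  also have "\<dots> \<le> (1/2)*d/2" using \<open>c*d \<le> 1/2\<close> \<open>d\<ge>0\<close> by (intro divide_right_mono mult_right_mono) auto
  also have "\<dots> = d/4" by simp
  finally have td: "t \<le> d/4" .
  have "t^2 = t*t" by (simp add: power2_eq_square)
  also have "\<dots> \<le> (d/4)*(c*D/8)" using td tle tpos \<open>d\<ge>0\<close> by (intro mult_mono) auto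
  also have "\<dots> = (c*d)*D/32" by simp
  also have "\<dots> \<le> D/64" using \<open>c*d \<le> 1/2\<close> Dpos by (simp add: mult_right_mono)
  finally have B: "t^2 \<le> D/64" .
  show ?thesis using eq A B Dpos by linarith
qed

lemma mid_concave:
  fixes g :: "real \<Rightarrow> real"
  assumes conc: "concave_on {lo<..<hi} g" and cont: "continuous_on {lo..hi} g"
    and a: "lo \<le> a1" "a1 < a2" "a2 \<le> hi"
  shows "(g a1 + g a2)/2 \<le> g ((a1+a2)/2)"
proof (rule ccontr)
  assume neg: "\<not> (g a1 + g a2)/2 \<le> g ((a1+a2)/2)"
  define e where "e = (g a1 + g a2)/2 - g ((a1+a2)/2)"
  have e: "e > 0" using neg e_def by simp
  have a1in: "a1 \<in> {lo..hi}" and a2in: "a2 \<in> {lo..hi}" using a by auto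
  obtain d1 where d1: "d1 > 0" "\<And>x'. x' \<in> {lo..hi} \<Longrightarrow> dist x' a1 < d1 \<Longrightarrow> dist (g x') (g a1) < e"
    using cont a1in e unfolding continuous_on_iff by metis
  obtain d2 where d2: "d2 > 0" "\<And>x'. x' \<in> {lo..hi} \<Longrightarrow> dist x' a2 < d2 \<Longrightarrow> dist (g x') (g a2) < e"
    using cont a2in e unfolding continuous_on_iff by metis
  define ep where "ep = min (min d1 d2) ((a2-a1)/2) / 2"
  have ep: "ep > 0" "ep < d1" "ep < d2" "ep < (a2-a1)/2" using d1 d2 a unfolding ep_def by (auto simp: min_def)
  define x1 where "x1 = a1 + ep"
  define x2 where "x2 = a2 - ep"
  have x1: "x1 \<in> {lo<..<hi}" "x1 \<in> {lo..hi}" "dist x1 a1 < d1" using ep a unfolding x1_def by (auto simp: dist_real_def)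
  have x2: "x2 \<in> {lo<..<hi}" "x2 \<in> {lo..hi}" "dist x2 a2 < d2" using ep a unfolding x2_def by (auto simp: dist_real_def)
  have g1: "g x1 > g a1 - e" using d1(2)[OF x1(2) x1(3)] by (simp add: dist_real_def)
  have g2: "g x2 > g a2 - e" using d2(2)[OF x2(2) x2(3)] by (simp add: dist_real_def)
  have eqm: "(1 - 1/2) *\<^sub>R x1 + (1/2) *\<^sub>R x2 = (a1+a2)/2" unfolding x1_def x2_def by (simp add: field_simps)
  have "- g ((1 - 1/2) *\<^sub>R x1 + (1/2) *\<^sub>R x2) \<le> (1 - 1/2) * (- g x1) + (1/2) * (- g x2)"
    using conc x1(1) x2(1) unfolding concave_on_def by (intro convex_onD[where f="\<lambda>x. - g x"]) auto
  hence "- g ((a1+a2)/2) \<le> (1 - 1/2) * (- g x1) + (1/2) * (- g x2)" by (simp only: eqm)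
  hence "g ((a1+a2)/2) \<ge> (g x1 + g x2)/2" by simp
  thus False using g1 g2 e_def by (simp add: field_simps)
qed

lemma key:
  fixes phi psi :: "real \<Rightarrow> real" and M :: "(real \<times> real) set"
  assumes cphi: "continuous_on {lo..hi} phi" and cpsi: "continuous_on {lo..hi} psi"
    and c1: "c1 \<ge> 0" "concave_on {lo<..<hi} (\<lambda>x. phi x - c1/2*x^2)"
    and c2: "c2 \<ge> 0" "concave_on {lo<..<hi} (\<lambda>x. - psi x - c2/2*x^2)"
    and le: "\<forall>x\<in>{lo..hi}. psi x \<le> phi x"
    and Mdef: "M = {(x, y). x \<in> {lo..hi} \<and> psi x \<le> y \<and> y \<le> phi x}"
    and q1: "(a1,b1) \<in> M" and q2: "(a2,b2) \<in> M" and aa: "a1 \<le> a2"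
    and d: "dist (u,v) (a1,b1) = d" "dist (u,v) (a2,b2) = d"
    and dmin: "\<forall>z\<in>M. d \<le> dist (u,v) z"
    and cd: "c1 * d \<le> 1/2" "c2 * d \<le> 1/2"
  shows "(a1,b1) = (a2,b2)"
proof (rule ccontr)
  assume ne: "(a1,b1) \<noteq> (a2,b2)"
  have d0: "d \<ge> 0" using d(1) by auto
  have sq: "dist (u,v) (x,y) ^ 2 = (u-x)^2 + (v-y)^2" for x y :: real
    by (simp add: dist_Pair_Pair dist_real_def)
  have h1: "(u-a1)^2+(v-b1)^2 = d^2" using sq[of a1 b1] d(1) by simp
  have h2: "(u-a2)^2+(v-b2)^2 = d^2" using sq[of a2 b2] d(2) by simp
  have far: "d^2 \<le> (u-x)^2 + (v-y)^2" if "(x,y) \<in> M" for x y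
  proof -
    have "d \<le> dist (u,v) (x,y)" using dmin that by blast
    hence "d^2 \<le> dist (u,v) (x,y) ^ 2" using d0 by (simp add: power_mono)
    thus ?thesis using sq by simp
  qed
  define D where "D = (a1-a2)^2+(b1-b2)^2"
  have "a1 \<noteq> a2 \<or> b1 \<noteq> b2" using ne by auto
  hence Dpos: "D > 0" unfolding D_def
    by (auto simp add: add_pos_nonneg add_nonneg_pos)
  have "(u-(a1+a2)/2)^2 + (v-(b1+b2)/2)^2 = ((u-a1)^2+(v-b1)^2 + ((u-a2)^2+(v-b2)^2))/2 - D/4"
    unfolding D_def by (simp add: power2_eq_square field_simps)
  hence midlt: "(u-(a1+a2)/2)^2 + (v-(b1+b2)/2)^2 < d^2" using h1 h2 Dpos by simp
  hence midnot: "((a1+a2)/2, (b1+b2)/2) \<notin> M" using far by force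
  have a1in: "a1 \<in> {lo..hi}" "psi a1 \<le> b1" "b1 \<le> phi a1" using q1 Mdef by auto
  have a2in: "a2 \<in> {lo..hi}" "psi a2 \<le> b2" "b2 \<le> phi a2" using q2 Mdef by auto
  show False
  proof (cases "a1 = a2")
    case True
    hence "((a1+a2)/2, (b1+b2)/2) \<in> M" using a1in a2in Mdef by auto
    thus False using midnot by simp
  next
    case False
    hence lt: "a1 < a2" using aa by simp
    define m where "m = (a1+a2)/2"
    have min: "m \<in> {lo..hi}" using a1in a2in m_def by auto
    have "(m, (b1+b2)/2) \<notin> M" using midnot unfolding m_def by simp
    hence "\<not> (psi m \<le> (b1+b2)/2 \<and> (b1+b2)/2 \<le> phi m)" using min Mdef by auto
    hence "(b1+b2)/2 > phi m \<or> (b1+b2)/2 < psi m" by auto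
    thus False
    proof
      assume up: "(b1+b2)/2 > phi m"
      have cg: "continuous_on {lo..hi} (\<lambda>x. phi x - c1/2*x^2)"
        by (intro continuous_intros cphi)
      have "((phi a1 - c1/2*a1^2) + (phi a2 - c1/2*a2^2))/2 \<le> phi m - c1/2*m^2"
        using mid_concave[OF c1(2) cg, of a1 a2] a1in a2in lt unfolding m_def by auto
      moreover have "c1/2*m^2 - (c1/2*a1^2 + c1/2*a2^2)/2 = - (c1/8*(a1-a2)^2)"
        unfolding m_def by (simp add: power2_eq_square field_simps)
      ultimately have lo: "phi m \<ge> (b1+b2)/2 - c1/8*(a1-a2)^2" using a1in a2in by (simp add: field_simps)
      have "(u-(a1+a2)/2)^2 + (v - phi m)^2 < d^2"
        using core[OF c1(1) cd(1) d0 h1 h2 ne lo up] .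
      moreover have "(m, phi m) \<in> M" using min le Mdef by auto
      ultimately show False using far m_def by force
    next
      assume dn: "(b1+b2)/2 < psi m"
      have cg: "continuous_on {lo..hi} (\<lambda>x. - psi x - c2/2*x^2)"
        by (intro continuous_intros cpsi)
      have "((- psi a1 - c2/2*a1^2) + (- psi a2 - c2/2*a2^2))/2 \<le> - psi m - c2/2*m^2"
        using mid_concave[OF c2(2) cg, of a1 a2] a1in a2in lt unfolding m_def by auto
      moreover have "c2/2*m^2 - (c2/2*a1^2 + c2/2*a2^2)/2 = - (c2/8*(a1-a2)^2)"
        unfolding m_def by (simp add: power2_eq_square field_simps)
      ultimately have lo: "- psi m \<ge> ((-b1)+(-b2))/2 - c2/8*(a1-a2)^2" using a1in a2in by (simp add: field_simps)
      have up: "- psi m < ((-b1)+(-b2))/2" using dn by simp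
      have h1': "(u-a1)^2+((-v)-(-b1))^2 = d^2" using h1 by (simp add: power2_commute)
      have h2': "(u-a2)^2+((-v)-(-b2))^2 = d^2" using h2 by (simp add: power2_commute)
      have ne': "(a1,-b1) \<noteq> (a2,-b2)" using ne by simp
      have "(u-(a1+a2)/2)^2 + ((-v) - (- psi m))^2 < d^2"
        using core[OF c2(1) cd(2) d0 h1' h2' ne' lo up] .
      hence "(u-m)^2 + (v - psi m)^2 < d^2" unfolding m_def by (simp add: power2_commute)
      moreover have "(m, psi m) \<in> M" using min le Mdef by auto
      ultimately show False using far by force
    qed
  qed
qed


lemma generic:
  fixes phi psi :: "real \<Rightarrow> real" and M :: "(real \<times> real) set"
  assumes lohi: "lo \<le> hi"
    and cphi: "continuous_on {lo..hi} phi" and cpsi: "continuous_on {lo..hi} psi"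
    and le: "\<forall>x\<in>{lo..hi}. psi x \<le> phi x"
    and scc: "semiconcave_on {lo<..<hi} phi" and scv: "semiconvex_on {lo<..<hi} psi"
    and Mdef: "M = {(x, y). x \<in> {lo..hi} \<and> psi x \<le> y \<and> y \<le> phi x}"
  shows "positive_reach M"
proof -
  obtain c1 where c1: "c1 \<ge> 0" "concave_on {lo<..<hi} (\<lambda>x. phi x - c1/2*x^2)"
    using scc unfolding semiconcave_on_def by blast
  obtain c2 where c2: "c2 \<ge> 0" "concave_on {lo<..<hi} (\<lambda>x. - psi x - c2/2*x^2)"
    using scv unfolding semiconvex_on_def semiconcave_on_def by blast
  define h where "h = (\<lambda>z::real\<times>real. (fst z, psi (fst z) + snd z * (phi (fst z) - psi (fst z))))"
  have hc: "continuous_on ({lo..hi} \<times> {0..1}) h" unfolding h_def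
    by (intro continuous_intros continuous_on_compose2[OF cphi] continuous_on_compose2[OF cpsi]) auto
  have himg: "h ` ({lo..hi} \<times> {0..1}) = M"
  proof
    show "h ` ({lo..hi} \<times> {0..1}) \<subseteq> M"
    proof
      fix z assume "z \<in> h ` ({lo..hi} \<times> {0..1})"
      then obtain x t where xt: "x \<in> {lo..hi}" "t \<in> {0..1}" "z = h (x,t)" by auto
      have dp: "phi x - psi x \<ge> 0" using le xt by auto
      have "t * (phi x - psi x) \<ge> 0" using xt dp by simp
      moreover have "t * (phi x - psi x) \<le> 1 * (phi x - psi x)" using xt dp by (intro mult_right_mono) auto
      ultimately show "z \<in> M" using xt Mdef unfolding h_def by auto
    qed
  next
    show "M \<subseteq> h ` ({lo..hi} \<times> {0..1})"
    proof
      fix z assume "z \<in> M"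
      then obtain x y where xy: "z = (x,y)" "x \<in> {lo..hi}" "psi x \<le> y" "y \<le> phi x" using Mdef by auto
      show "z \<in> h ` ({lo..hi} \<times> {0..1})"
      proof (cases "phi x = psi x")
        case True
        hence "z = h (x, 0)" using xy unfolding h_def by auto
        thus ?thesis using xy by force
      next
        case False
        hence pos: "phi x - psi x > 0" using xy by auto
        define t where "t = (y - psi x) / (phi x - psi x)"
        have t: "t \<in> {0..1}" using xy pos unfolding t_def by (auto simp: field_simps)
        have "z = h (x, t)" using xy pos unfolding h_def t_def by (auto simp: field_simps)
        thus ?thesis using xy t by force
      qed
    qed
  qed
  have "compact M" using himg hc compact_continuous_image compact_Times compact_Icc by metis
  hence clM: "closed M" by (simp add: compact_imp_closed)
  have "(lo, psi lo) \<in> M" using lohi le Mdef by auto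
  hence neM: "M \<noteq> {}" by blast
  define ep where "ep = 1 / (2*(c1+c2+1))"
  have ep: "ep > 0" using c1 c2 ep_def by simp
  show ?thesis unfolding positive_reach_def
  proof (intro exI[of _ ep] conjI allI impI)
    show "ep > 0" by (rule ep)
    fix p assume pd: "infdist p M < ep"
    obtain q where q: "q \<in> M" "infdist p M = dist p q" using infdist_attains_inf[OF clM neM] by metis
    define d where "d = infdist p M"
    have dmin: "\<forall>z\<in>M. d \<le> dist p z" unfolding d_def using infdist_le by blast
    have d0: "d \<ge> 0" unfolding d_def by (rule infdist_nonneg)
    have "(c1+c2+1) * d \<le> (c1+c2+1) * ep" using pd d_def c1 c2 by (intro mult_left_mono) auto
    also have "\<dots> = 1/2" unfolding ep_def using c1 c2 by (simp add: field_simps)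
    finally have cc: "(c1+c2+1) * d \<le> 1/2" .
    have dist3: "(c1+c2+1) * d = c1*d + c2*d + d" by (simp add: algebra_simps)
    have "c1*d \<ge> 0" "c2*d \<ge> 0" using c1 c2 d0 by auto
    hence cd1: "c1 * d \<le> 1/2" and cd2: "c2 * d \<le> 1/2" using cc dist3 d0 by linarith+
    show "\<exists>!q. q \<in> M \<and> dist p q = infdist p M"
    proof (rule ex1I[of _ q])
      show "q \<in> M \<and> dist p q = infdist p M" using q by simp
      fix q' assume q': "q' \<in> M \<and> dist p q' = infdist p M"
      obtain u v where p: "p = (u,v)" by force
      obtain a1 b1 where e1: "q' = (a1,b1)" by force
      obtain a2 b2 where e2: "q = (a2,b2)" by force
      have m1: "(a1,b1) \<in> M" and m2: "(a2,b2) \<in> M" using q q' e1 e2 by auto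
      have dd1: "dist (u,v) (a1,b1) = d" using q' e1 p d_def by simp
      have dd2: "dist (u,v) (a2,b2) = d" using q e2 p d_def by simp
      have dm: "\<forall>z\<in>M. d \<le> dist (u,v) z" using dmin p by simp
      have "(a1,b1) = (a2,b2)"
      proof (cases "a1 \<le> a2")
        case True
        show ?thesis by (rule key[OF cphi cpsi c1 c2 le Mdef m1 m2 True dd1 dd2 dm cd1 cd2])
      next
        case False
        hence "a2 \<le> a1" by simp
        from key[OF cphi cpsi c1 c2 le Mdef m2 m1 this dd2 dd1 dm cd1 cd2] show ?thesis by simp
      qed
      thus "q' = q" using e1 e2 by simp
    qed
  qed
qed


theorem lemma2p22:
  fixes B :: "(real \<times> real) set"
  assumes "B_set B"
  shows "positive_reach B"
proof -
  have "B_minus_set B \<or> B_plus_set B" using assms unfolding B_set_def .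
  thus ?thesis
  proof
    assume "B_minus_set B"
    then obtain r phi psi L1 L2 where r: "r > 0"
      and sgn: "\<forall>x\<in>{0..r}. psi x \<le> 0 \<and> 0 \<le> phi x"
      and l1: "L1-lipschitz_on {0..r} phi" and l2: "L2-lipschitz_on {0..r} psi"
      and scc: "semiconcave_on {0<..<r} phi" and scv: "semiconvex_on {0<..<r} psi"
      and Bd: "B = {(x, y). x \<in> {0..r} \<and> psi x \<le> y \<and> y \<le> phi x}"
      unfolding B_minus_set_def by auto
    show ?thesis
      by (rule generic[OF _ lipschitz_on_continuous_on[OF l1] lipschitz_on_continuous_on[OF l2] _ scc scv Bd])
         (use r sgn in auto)
  next
    assume "B_plus_set B"
    then obtain r phi psi L1 L2 where r: "r > 0"
      and sgn: "\<forall>x\<in>{-r..r}. psi x \<le> 0 \<and> 0 \<le> phi x"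
      and l1: "L1-lipschitz_on {-r..r} phi" and l2: "L2-lipschitz_on {-r..r} psi"
      and scc: "semiconcave_on {-r<..<r} phi" and scv: "semiconvex_on {-r<..<r} psi"
      and Bd: "B = {(x, y). x \<in> {-r..r} \<and> psi x \<le> y \<and> y \<le> phi x}"
      unfolding B_plus_set_def by auto
    show ?thesis
      by (rule generic[OF _ lipschitz_on_continuous_on[OF l1] lipschitz_on_continuous_on[OF l2] _ scc scv Bd])
         (use r sgn in auto)
  qed
qed

end
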